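(* In the parallel-links routing game with homogeneous costs described in the context and $N=2$ users, for each user $k\in\{1,2\}$ there exists a feasible routing profile $\bar{\mathbf f}$ whose link totals equal the system-optimal link flows $f^*_l$ and such that $J^k(\bar{\mathbf f})\ge\hat J^k$.
   Context: Parallel-links routing game: users $\mathcal N=\{1,\dots,N\}$ share parallel links $\mathcal L=\{1,\dots,L\}$ from a common source to a common destination; link $l$ has capacity $c_l$. User $i$ has demand $r^i>0$, $R=\sum_ir^i<\sum_lc_l$. A routing strategy of user $i$ is $\mathbf f^i=(f^i_l)_l$ with $f^i_l\ge0$, $\sum_lf^i_l=r^i$; $f_l=\sum_if^i_l$. Homogeneous costs: $J^i(\mathbf f)=\sum_lf^i_lT_l(f_l)$, each $T_l:[0,\infty)\to[0,\infty)$ strictly increasing, convex, continuously differentiable, with $T_l(f_l)=T(c_l-f_l)$ for $f_l<c_l$ and $T_l(f_l)=\infty$ for $f_l\ge c_l$, for a single link-independent function $T$ with $T(c_l-f_l)$ strictly increasing in $f_l$. NEP: the unique feasible $\hat{\mathbf f}$ in which each user's strategy minimizes its cost given the others'; $\hat J^i=J^i(\hat{\mathbf f})$. $(f^*_l)$ are the link totals minimizing $\sum_lf_lT_l(f_l)$ over feasible profiles. *)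

theory Defs
  imports "HOL-Analysis.Analysis"
begin

definition feasible_strategy :: "'l set \<Rightarrow> real \<Rightarrow> ('l \<Rightarrow> real) \<Rightarrow> bool" where
  "feasible_strategy Ls ri h \<longleftrightarrow> (\<forall>l\<in>Ls. 0 \<le> h l) \<and> (\<Sum>l\<in>Ls. h l) = ri"

definition feasible_profile :: "nat set \<Rightarrow> 'l set \<Rightarrow> (nat \<Rightarrow> real) \<Rightarrow> (nat \<Rightarrow> 'l \<Rightarrow> real) \<Rightarrow> bool" where
  "feasible_profile U Ls r f \<longleftrightarrow> (\<forall>i\<in>U. feasible_strategy Ls (r i) (f i))"

definition link_flow :: "nat set \<Rightarrow> (nat \<Rightarrow> 'l \<Rightarrow> real) \<Rightarrow> 'l \<Rightarrow> real" where
  "link_flow U f l = (\<Sum>i\<in>U. f i l)"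

definition link_cost :: "(real \<Rightarrow> real) \<Rightarrow> ('l \<Rightarrow> real) \<Rightarrow> 'l \<Rightarrow> real \<Rightarrow> ereal" where
  "link_cost T c l x = (if x < c l then ereal (T (c l - x)) else \<infinity>)"

definition user_cost :: "nat set \<Rightarrow> 'l set \<Rightarrow> (real \<Rightarrow> real) \<Rightarrow> ('l \<Rightarrow> real) \<Rightarrow> nat \<Rightarrow> (nat \<Rightarrow> 'l \<Rightarrow> real) \<Rightarrow> ereal" where
  "user_cost U Ls T c i f = (\<Sum>l\<in>Ls. ereal (f i l) * link_cost T c l (link_flow U f l))"

definition total_cost :: "nat set \<Rightarrow> 'l set \<Rightarrow> (real \<Rightarrow> real) \<Rightarrow> ('l \<Rightarrow> real) \<Rightarrow> (nat \<Rightarrow> 'l \<Rightarrow> real) \<Rightarrow> ereal" where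
  "total_cost U Ls T c f = (\<Sum>l\<in>Ls. ereal (link_flow U f l) * link_cost T c l (link_flow U f l))"

definition is_NEP :: "nat set \<Rightarrow> 'l set \<Rightarrow> (nat \<Rightarrow> real) \<Rightarrow> (real \<Rightarrow> real) \<Rightarrow> ('l \<Rightarrow> real) \<Rightarrow> (nat \<Rightarrow> 'l \<Rightarrow> real) \<Rightarrow> bool" where
  "is_NEP U Ls r T c f \<longleftrightarrow> feasible_profile U Ls r f \<and>
     (\<forall>i\<in>U. \<forall>h. feasible_strategy Ls (r i) h \<longrightarrow> user_cost U Ls T c i f \<le> user_cost U Ls T c i (f(i := h)))"

definition is_system_opt :: "nat set \<Rightarrow> 'l set \<Rightarrow> (nat \<Rightarrow> real) \<Rightarrow> (real \<Rightarrow> real) \<Rightarrow> ('l \<Rightarrow> real) \<Rightarrow> (nat \<Rightarrow> 'l \<Rightarrow> real) \<Rightarrow> bool" where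
  "is_system_opt U Ls r T c f \<longleftrightarrow> feasible_profile U Ls r f \<and>
     (\<forall>g. feasible_profile U Ls r g \<longrightarrow> total_cost U Ls T c f \<le> total_cost U Ls T c g)"

definition homogeneous_cost_ok :: "(real \<Rightarrow> real) \<Rightarrow> real \<Rightarrow> bool" where
  "homogeneous_cost_ok T cl \<longleftrightarrow>
     (\<forall>x\<in>{0..<cl}. 0 \<le> T (cl - x)) \<and>
     strict_mono_on {0..<cl} (\<lambda>x. T (cl - x)) \<and>
     convex_on {0..<cl} (\<lambda>x. T (cl - x)) \<and>
     (\<exists>D. (\<forall>x\<in>{0..<cl}. ((\<lambda>y. T (cl - y)) has_real_derivative D x) (at x within {0..<cl}))
          \<and> continuous_on {0..<cl} D)"

end

theory Submission
  imports Defs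
begin

lemma link_cost_mono:
  assumes ok: "homogeneous_cost_ok T (c l)" and "0 \<le> x" and "x \<le> y"
  shows "link_cost T c l x \<le> link_cost T c l y"
proof (cases "y < c l")
  case True
  then have "x < c l" using assms by linarith
  have sm: "strict_mono_on {0..<c l} (\<lambda>x. T (c l - x))" using ok unfolding homogeneous_cost_ok_def by blast
  have "T (c l - x) \<le> T (c l - y)"
  proof (cases "x = y")
    case False
    then have "x < y" using assms by simp
    then show ?thesis using sm True assms \<open>x < c l\<close> unfolding strict_mono_on_def
      by (smt (verit) atLeastLessThan_iff)
  qed simp
  then show ?thesis using True \<open>x < c l\<close> unfolding link_cost_def by simp
next
  case False
  then show ?thesis unfolding link_cost_def by simp
qed

lemma flow2: "k \<noteq> j \<Longrightarrow> link_flow {k, j} f l = f k l + f j l"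
  unfolding link_flow_def by simp

lemma main_aux:
  fixes Ls :: "'l set" and fhat fopt :: "nat \<Rightarrow> 'l \<Rightarrow> real"
  assumes fin: "finite Ls" and kj: "k \<noteq> j"
    and ok: "\<forall>l\<in>Ls. homogeneous_cost_ok T (c l)"
    and rk: "r k > 0"
    and fh: "feasible_profile {k, j} Ls r fhat"
    and fo: "feasible_profile {k, j} Ls r fopt"
    and ne: "\<forall>h. feasible_strategy Ls (r k) h \<longrightarrow> user_cost {k, j} Ls T c k fhat \<le> user_cost {k, j} Ls T c k (fhat(k := h))"
  shows "\<exists>fbar. feasible_profile {k, j} Ls r fbar
           \<and> (\<forall>l\<in>Ls. link_flow {k, j} fbar l = link_flow {k, j} fopt l)
           \<and> user_cost {k, j} Ls T c k fbar \<ge> user_cost {k, j} Ls T c k fhat"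
proof -
  define F where "F l = link_flow {k, j} fopt l" for l
  have F: "F l = fopt k l + fopt j l" for l using flow2[OF kj] F_def by simp
  have fok: "\<forall>l\<in>Ls. 0 \<le> fopt k l" "(\<Sum>l\<in>Ls. fopt k l) = r k"
    using fo unfolding feasible_profile_def feasible_strategy_def by auto
  have foj: "\<forall>l\<in>Ls. 0 \<le> fopt j l" "(\<Sum>l\<in>Ls. fopt j l) = r j"
    using fo unfolding feasible_profile_def feasible_strategy_def by auto
  have fhj: "\<forall>l\<in>Ls. 0 \<le> fhat j l" "(\<Sum>l\<in>Ls. fhat j l) = r j"
    using fh unfolding feasible_profile_def feasible_strategy_def by auto
  have F0: "\<forall>l\<in>Ls. 0 \<le> F l" using fok foj F by (simp add: add_nonneg_nonneg)
  have SF: "(\<Sum>l\<in>Ls. F l) = r k + r j" using fok foj F by (simp add: sum.distrib)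
  define d where "d l = max (F l - fhat j l) 0" for l
  define S where "S = (\<Sum>l\<in>Ls. d l)"
  have "(\<Sum>l\<in>Ls. F l - fhat j l) \<le> S" unfolding S_def d_def by (rule sum_mono) simp
  then have Sge: "r k \<le> S" using SF fhj by (simp add: sum_subtractf)
  then have Spos: "S > 0" using rk by linarith
  define \<theta> where "\<theta> = r k / S"
  have th0: "0 < \<theta>" and th1: "\<theta> \<le> 1" using Spos Sge rk unfolding \<theta>_def by auto
  define h where "h l = \<theta> * d l" for l
  have h0: "0 \<le> h l" for l unfolding h_def d_def using th0 by simp
  have hS: "(\<Sum>l\<in>Ls. h l) = r k"
  proof -
    have "(\<Sum>l\<in>Ls. h l) = \<theta> * S" unfolding h_def S_def by (simp add: sum_distrib_left)
    then show ?thesis using Spos unfolding \<theta>_def by simp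
  qed
  have hd: "h l \<le> d l" for l unfolding h_def using th1 th0
    by (metis d_def max.cobounded2 mult_left_le_one_le order_less_imp_le)
  have hpos: "h l > 0 \<Longrightarrow> h l + fhat j l \<le> F l" for l
  proof -
    assume "h l > 0"
    then have "d l > 0" unfolding h_def using th0 by (simp add: zero_less_mult_iff)
    then have "d l = F l - fhat j l" unfolding d_def by auto
    then show ?thesis using hd[of l] by simp
  qed
  have hF: "l \<in> Ls \<Longrightarrow> h l \<le> F l" for l
  proof (cases "h l > 0")
    case True
    assume "l \<in> Ls"
    then show ?thesis using hpos[OF True] fhj by force
  next
    case False
    assume "l \<in> Ls"
    then show ?thesis using False F0 h0[of l] by force
  qed
  define fbar where "fbar = fopt(k := h, j := (\<lambda>l. F l - h l))"
  have fbk: "fbar k = h" and fbj: "fbar j = (\<lambda>l. F l - h l)" unfolding fbar_def using kj by auto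
  have feas: "feasible_profile {k, j} Ls r fbar"
    unfolding feasible_profile_def feasible_strategy_def
    using fbk fbj h0 hS hF SF by (auto simp: sum_subtractf)
  have flows: "\<forall>l\<in>Ls. link_flow {k, j} fbar l = link_flow {k, j} fopt l"
  proof
    fix l assume "l \<in> Ls"
    have "link_flow {k, j} fbar l = fbar k l + fbar j l" by (rule flow2[OF kj])
    also have "\<dots> = F l" using fbk fbj by simp
    finally show "link_flow {k, j} fbar l = link_flow {k, j} fopt l" using F_def by simp
  qed
  have fs: "feasible_strategy Ls (r k) h" unfolding feasible_strategy_def using h0 hS by simp
  have "user_cost {k, j} Ls T c k (fhat(k := h)) \<le> user_cost {k, j} Ls T c k fbar"
    unfolding user_cost_def
  proof (rule sum_mono)
    fix l assume l: "l \<in> Ls"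
    have lf1: "link_flow {k, j} (fhat(k := h)) l = h l + fhat j l"
      by (subst flow2[OF kj]) (use kj in simp)
    have lf2: "link_flow {k, j} fbar l = F l" using flows l F_def by simp
    show "ereal ((fhat(k := h)) k l) * link_cost T c l (link_flow {k, j} (fhat(k := h)) l)
          \<le> ereal (fbar k l) * link_cost T c l (link_flow {k, j} fbar l)"
    proof (cases "h l > 0")
      case True
      have "link_cost T c l (h l + fhat j l) \<le> link_cost T c l (F l)"
        by (rule link_cost_mono) (use ok l hpos[OF True] h0[of l] fhj in auto)
      then show ?thesis using lf1 lf2 fbk h0[of l]
        by (simp add: ereal_mult_left_mono)
    next
      case False
      then have "h l = 0" using h0[of l] by (simp add: order_less_le)
      then show ?thesis using fbk by (simp add: zero_ereal_def[symmetric])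
    qed
  qed
  then have "user_cost {k, j} Ls T c k fhat \<le> user_cost {k, j} Ls T c k fbar"
    using ne fs by (meson order_trans)
  then show ?thesis using feas flows by blast
qed

theorem lemma3p3:
  fixes Ls :: "'l set" and c :: "'l \<Rightarrow> real" and r :: "nat \<Rightarrow> real"
    and T :: "real \<Rightarrow> real" and fhat fopt :: "nat \<Rightarrow> 'l \<Rightarrow> real" and k :: nat
  assumes "finite Ls"
    and "\<forall>l\<in>Ls. 0 < c l"
    and "\<forall>l\<in>Ls. homogeneous_cost_ok T (c l)"
    and "r 1 > 0" and "r 2 > 0"
    and "r 1 + r 2 < (\<Sum>l\<in>Ls. c l)"
    and "is_NEP {1, 2} Ls r T c fhat"
    and "is_system_opt {1, 2} Ls r T c fopt"
    and "k \<in> {1, 2}"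
  shows "\<exists>fbar. feasible_profile {1, 2} Ls r fbar
           \<and> (\<forall>l\<in>Ls. link_flow {1, 2} fbar l = link_flow {1, 2} fopt l)
           \<and> user_cost {1, 2} Ls T c k fbar \<ge> user_cost {1, 2} Ls T c k fhat"
proof -
  define j where "j = (3::nat) - k"
  have U: "{1, 2} = {k, j}" and kj: "k \<noteq> j" using assms(9) unfolding j_def by auto
  have rk: "r k > 0" using assms(4,5,9) by auto
  have fh: "feasible_profile {k, j} Ls r fhat" and ne0: "\<forall>i\<in>{k,j}. \<forall>h. feasible_strategy Ls (r i) h \<longrightarrow> user_cost {k, j} Ls T c i fhat \<le> user_cost {k, j} Ls T c i (fhat(i := h))"
    using assms(7) unfolding is_NEP_def U by auto
  have fo: "feasible_profile {k, j} Ls r fopt" using assms(8) unfolding is_system_opt_def U by auto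
  show ?thesis unfolding U
    by (rule main_aux[OF assms(1) kj assms(3) rk fh fo]) (use ne0 in blast)
qed

end
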